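(* Let $k\ge 1$, let $(\varphi,G,H)$ be a $k$-orbit-form and $\sigma$ a $k$-molecule over $I$. Then for every automorphism $\pi\in\mathrm{Aut}(I)$ we have $\pi\big((\varphi,G,H)*\sigma\big)=(\varphi,G,H)*\pi\sigma$.
   Context: $I$ is a finite set of atoms partitioned into a finite set $C$ of colours. $\mathrm{Sym}(I)$ is the group of all permutations of $I$, and $\mathrm{Aut}(I)\subseteq\mathrm{Sym}(I)$ the subgroup of permutations mapping each colour onto itself. Permutations act on hereditarily finite sets over $I$ by $\theta(x)=\{\theta(y)\mid y\in x\}$; for a set $G$ of permutations and object $x$, $G(x)=Gx=\{g(x)\mid g\in G\}$. A $k$-molecule is an injective map $\sigma:\{0,\dots,k-1\}\to I$; $\pi\sigma$ denotes composition. The configuration $\mathit{conf}(\sigma_0,\dots,\sigma_{\ell-1})$ of a sequence of $k$-molecules is the pair $(\sim,col)$ where $\sim$ is the equivalence relation on $\{0,\dots,\ell-1\}\times\{0,\dots,k-1\}$ with $(i,p)\sim(j,q)$ iff $\sigma_i(p)=\sigma_j(q)$, and $col(i,p)$ is the colour containing $\sigma_i(p)$. An abstract $\ell$-configuration is a pair $(\sim,col)$ with $\sim$ an equivalence relation on $\{0,\dots,\ell-1\}\times\{0,\dots,k-1\}$ such that $(i,p)\sim(i,q)\Leftrightarrow p=q$, and $col:\{0,\dots,\ell-1\}\times\{0,\dots,k-1\}\to C$ constant on $\sim$-classes. The $k$-forms form the smallest set containing new symbols $c_0,\dots,c_{k-1}$ and all finite sets $\{(\varphi_i,E_i)\mid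 1\le i\le n\}$ with $\varphi_i$ $k$-forms and $E_i$ abstract 2-configurations. For a $k$-form $\varphi$ and $k$-molecule $\sigma$: $c_p*\sigma=\sigma(p)$, and for $\varphi=\{(\varphi_i,E_i)\mid 1\le i\le n\}$, $\varphi*\sigma=\{\varphi_i*\tau\mid 1\le i\le n,\ \tau \text{ a }k\text{-molecule with } E_i=\mathit{conf}(\tau,\sigma)\}$. A $k$-orbit-form is a triple $(\varphi,G,H)$ with $\varphi$ a $k$-form and $H\subseteq G\subseteq\mathrm{Sym}(I)$ subgroups commuting with $\mathrm{Aut}(I)$ in the sense $\pi G=G\pi$ and $\pi H=H\pi$ for all $\pi\in\mathrm{Aut}(I)$. Define $(\varphi,G,H)*\sigma=G\big(\bigcup_{h\in H}\varphi*h\sigma\big)$, where for $\varphi=c_p$ and $H\neq 1$ the term $\varphi*h\sigma$ inside the union is understood as $\{c_p*h\sigma\}$. *)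

theory Defs
  imports Main "HOL-Library.FSet" "HOL-Library.Disjoint_Sets" "HOL-Combinatorics.Permutations"
begin

(* Hereditarily finite sets over atoms of type 'a *)
datatype 'a hf = Atom 'a | HSet "'a hf fset"

abbreviation hf_act :: "('a \<Rightarrow> 'a) \<Rightarrow> 'a hf \<Rightarrow> 'a hf" where
  "hf_act \<theta> x \<equiv> map_hf \<theta> x"

fun hf_elems :: "'a hf \<Rightarrow> 'a hf set" where
  "hf_elems (Atom a) = {}"
| "hf_elems (HSet s) = fset s"

definition hf_of_set :: "'a hf set \<Rightarrow> 'a hf" where
  "hf_of_set S = HSet (Abs_fset S)"

definition Sym :: "'a set \<Rightarrow> ('a \<Rightarrow> 'a) set" where
  "Sym I = {p. p permutes I}"

definition Aut :: "'a set \<Rightarrow> 'a set set \<Rightarrow> ('a \<Rightarrow> 'a) set" where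
  "Aut I Cs = {p \<in> Sym I. \<forall>c\<in>Cs. p ` c = c}"

definition sym_subgroup :: "'a set \<Rightarrow> ('a \<Rightarrow> 'a) set \<Rightarrow> bool" where
  "sym_subgroup I G \<longleftrightarrow> G \<subseteq> Sym I \<and> id \<in> G \<and>
     (\<forall>g\<in>G. \<forall>h\<in>G. g \<circ> h \<in> G) \<and> (\<forall>g\<in>G. inv g \<in> G)"

definition commutes_Aut :: "'a set \<Rightarrow> 'a set set \<Rightarrow> ('a \<Rightarrow> 'a) set \<Rightarrow> bool" where
  "commutes_Aut I Cs G \<longleftrightarrow> (\<forall>\<pi>\<in>Aut I Cs. (\<lambda>g. \<pi> \<circ> g) ` G = (\<lambda>g. g \<circ> \<pi>) ` G)"

(* a k-molecule: injective map {0..k-1} -> I, represented as a distinct list of length k *)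
definition molecule :: "'a set \<Rightarrow> nat \<Rightarrow> 'a list \<Rightarrow> bool" where
  "molecule I k \<sigma> \<longleftrightarrow> length \<sigma> = k \<and> distinct \<sigma> \<and> set \<sigma> \<subseteq> I"

(* configurations: equivalence relation on {0..l-1} x {0..k-1} and colouring
   (colouring is {} outside the domain, for a canonical representation) *)
type_synonym 'a config = "((nat \<times> nat) \<times> (nat \<times> nat)) set \<times> (nat \<times> nat \<Rightarrow> 'a set)"

definition conf :: "'a set set \<Rightarrow> nat \<Rightarrow> 'a list list \<Rightarrow> 'a config" where
  "conf Cs k ss =
     ({((i,p),(j,q)). i < length ss \<and> j < length ss \<and> p < k \<and> q < k \<and> ss!i!p = ss!j!q},
      (\<lambda>(i,p). if i < length ss \<and> p < k then (THE c. c \<in> Cs \<and> ss!i!p \<in> c) else {}))"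

definition abstract_conf :: "'a set set \<Rightarrow> nat \<Rightarrow> nat \<Rightarrow> 'a config \<Rightarrow> bool" where
  "abstract_conf Cs k l E \<longleftrightarrow>
     (let D = {..<l} \<times> {..<k}; R = fst E; col = snd E in
       equiv D R \<and>
       (\<forall>i<l. \<forall>p<k. \<forall>q<k. ((i,p),(i,q)) \<in> R \<longleftrightarrow> p = q) \<and>
       (\<forall>x\<in>D. col x \<in> Cs) \<and> (\<forall>x. x \<notin> D \<longrightarrow> col x = {}) \<and>
       (\<forall>(x,y)\<in>R. col x = col y))"

(* k-forms: symbols c_p, and finite sets of pairs (form, abstract 2-configuration) *)
datatype 'a form = C nat | Form "('a form \<times> 'a config) fset"

primrec wf_form :: "'a set set \<Rightarrow> nat \<Rightarrow> 'a form \<Rightarrow> bool" where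
  "wf_form Cs k (C p) = (p < k)"
| "wf_form Cs k (Form S) =
     (\<forall>(b,E)\<in>fset (fimage (map_prod (wf_form Cs k) id) S). b \<and> abstract_conf Cs k 2 E)"

primrec form_eval :: "'a set \<Rightarrow> 'a set set \<Rightarrow> nat \<Rightarrow> 'a form \<Rightarrow> 'a list \<Rightarrow> 'a hf" where
  "form_eval I Cs k (C p) = (\<lambda>\<sigma>. Atom (\<sigma> ! p))"
| "form_eval I Cs k (Form S) = (\<lambda>\<sigma>. hf_of_set
     (\<Union>(f,E)\<in>fset (fimage (map_prod (form_eval I Cs k) id) S).
        {f \<tau> | \<tau>. molecule I k \<tau> \<and> E = conf Cs k [\<tau>, \<sigma>]}))"

definition orbit_form :: "'a set \<Rightarrow> 'a set set \<Rightarrow> nat \<Rightarrow> 'a form \<Rightarrow> ('a \<Rightarrow> 'a) set \<Rightarrow> ('a \<Rightarrow> 'a) set \<Rightarrow> bool" where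
  "orbit_form I Cs k \<phi> G H \<longleftrightarrow> wf_form Cs k \<phi> \<and> sym_subgroup I G \<and> sym_subgroup I H \<and> H \<subseteq> G \<and>
     commutes_Aut I Cs G \<and> commutes_Aut I Cs H"

(* the union  U_{h in H} phi * h sigma, with the stated convention for phi = c_p *)
definition orbit_union :: "'a set \<Rightarrow> 'a set set \<Rightarrow> nat \<Rightarrow> 'a form \<Rightarrow> ('a \<Rightarrow> 'a) set \<Rightarrow> 'a list \<Rightarrow> 'a hf" where
  "orbit_union I Cs k \<phi> H \<sigma> =
     (case \<phi> of
        C p \<Rightarrow> (if H = {id} then form_eval I Cs k \<phi> \<sigma>
                 else hf_of_set {form_eval I Cs k \<phi> (map h \<sigma>) | h. h \<in> H})
      | Form S \<Rightarrow> hf_of_set (\<Union>h\<in>H. hf_elems (form_eval I Cs k \<phi> (map h \<sigma>))))"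

definition orbit_eval :: "'a set \<Rightarrow> 'a set set \<Rightarrow> nat \<Rightarrow> 'a form \<Rightarrow> ('a \<Rightarrow> 'a) set \<Rightarrow> ('a \<Rightarrow> 'a) set \<Rightarrow> 'a list \<Rightarrow> 'a hf" where
  "orbit_eval I Cs k \<phi> G H \<sigma> = hf_of_set ((\<lambda>g. hf_act g (orbit_union I Cs k \<phi> H \<sigma>)) ` G)"

end

theory Submission imports Defs begin

lemma hf_act_of_set:
  assumes "finite X"
  shows "hf_act \<pi> (hf_of_set X) = hf_of_set (hf_act \<pi> ` X)"
  using assms by (simp add: hf_of_set_def fimage.abs_eq eq_onp_def)

lemma hf_elems_of_set: "finite X \<Longrightarrow> hf_elems (hf_of_set X) = X"
  by (simp add: hf_of_set_def Abs_fset_inverse)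

definition formX :: "'a set \<Rightarrow> 'a set set \<Rightarrow> nat \<Rightarrow> ('a form \<times> 'a config) fset \<Rightarrow> 'a list \<Rightarrow> 'a hf set" where
  "formX I Cs k S \<tau> = (\<Union>(\<psi>,E)\<in>fset S. {form_eval I Cs k \<psi> \<tau>' | \<tau>'. molecule I k \<tau>' \<and> E = conf Cs k [\<tau>', \<tau>]})"

lemma form_eval_Form: "form_eval I Cs k (Form S) \<tau> = hf_of_set (formX I Cs k S \<tau>)"
  by (simp add: formX_def image_image split_def)

lemma finite_molecules: "finite I \<Longrightarrow> finite {\<tau>. molecule I k \<tau>}"
  by (rule finite_subset[OF _ finite_lists_length_eq[of I k]]) (auto simp: molecule_def)

lemma finite_formX: "finite I \<Longrightarrow> finite (formX I Cs k S \<tau>)"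
proof -
  assume "finite I"
  hence "finite {\<tau>. molecule I k \<tau>}" by (rule finite_molecules)
  have "\<And>\<psi> E. {form_eval I Cs k \<psi> \<tau>' | \<tau>'. molecule I k \<tau>' \<and> E = conf Cs k [\<tau>', \<tau>]}
      \<subseteq> form_eval I Cs k \<psi> ` {\<tau>. molecule I k \<tau>}" by auto
  then show ?thesis unfolding formX_def
    using \<open>finite {\<tau>. molecule I k \<tau>}\<close> by (auto intro: finite_subset)
qed

lemma Aut_D: "\<pi> \<in> Aut I Cs \<Longrightarrow> \<pi> permutes I \<and> (\<forall>c\<in>Cs. \<pi> ` c = c)"
  by (simp add: Aut_def Sym_def)

lemma Aut_inv: assumes "\<pi> \<in> Aut I Cs" shows "inv \<pi> \<in> Aut I Cs"
proof -
  from Aut_D[OF assms] have p: "\<pi> permutes I" and c: "\<forall>c\<in>Cs. \<pi> ` c = c" by auto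
  have "inj \<pi>" using p permutes_inj by blast
  have "inv \<pi> ` c = c" if "c \<in> Cs" for c
  proof -
    have "inv \<pi> ` (\<pi> ` c) = c" using \<open>inj \<pi>\<close> by (simp add: image_inv_f_f)
    thus ?thesis using c that by simp
  qed
  thus ?thesis using permutes_inv[OF p] by (simp add: Aut_def Sym_def)
qed

lemma mem_col_iff: "inj \<pi> \<Longrightarrow> \<pi> ` c = c \<Longrightarrow> (\<pi> x \<in> c) = (x \<in> c)"
  by (metis imageE imageI inj_eq)

lemma conf_map:
  assumes "inj \<pi>" "\<forall>c\<in>Cs. \<pi> ` c = c" "\<forall>s\<in>set ss. k \<le> length s"
  shows "conf Cs k (map (map \<pi>) ss) = conf Cs k ss"
proof -
  have nth: "map \<pi> (ss ! i) ! p = \<pi> (ss ! i ! p)" if "i < length ss" "p < k" for i p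
    using that assms(3) by (metis nth_map nth_mem order_less_le_trans)
  have th: "(THE c. c \<in> Cs \<and> \<pi> x \<in> c) = (THE c. c \<in> Cs \<and> x \<in> c)" for x
    using mem_col_iff[OF assms(1)] assms(2) by metis
  have 2: "(\<lambda>(i,p). if i < length (map (map \<pi>) ss) \<and> p < k then (THE c. c \<in> Cs \<and> map (map \<pi>) ss!i!p \<in> c) else {})
     = (\<lambda>(i,p). if i < length ss \<and> p < k then (THE c. c \<in> Cs \<and> ss!i!p \<in> c) else {})"
    by (rule ext) (clarsimp simp: nth th)
  show ?thesis unfolding conf_def 2
    using nth by (auto simp: inj_eq[OF assms(1)])
qed

lemma molecule_map: "\<pi> permutes I \<Longrightarrow> molecule I k \<tau> \<Longrightarrow> molecule I k (map \<pi> \<tau>)"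
  unfolding molecule_def
  by (auto simp: distinct_map permutes_inj inj_on_subset permutes_in_image)
     (meson inj_on_subset permutes_inj subset_UNIV)

lemma formX_map:
  assumes A: "\<pi> \<in> Aut I Cs"
    and IH: "\<forall>(\<psi>,E)\<in>fset S. \<forall>\<tau>'. length \<tau>' = k \<longrightarrow> hf_act \<pi> (form_eval I Cs k \<psi> \<tau>') = form_eval I Cs k \<psi> (map \<pi> \<tau>')"
    and L: "length \<tau> = k"
  shows "hf_act \<pi> ` formX I Cs k S \<tau> = formX I Cs k S (map \<pi> \<tau>)"
proof -
  from Aut_D[OF A] have p: "\<pi> permutes I" and c: "\<forall>c\<in>Cs. \<pi> ` c = c" by auto
  have inj: "inj \<pi>" using p permutes_inj by blast
  have pi: "inv \<pi> permutes I" using permutes_inv[OF p] .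
  have ii: "\<pi> (inv \<pi> x) = x" for x using p permutes_inverses(1) by fastforce
  have cf: "conf Cs k [map \<pi> a, map \<pi> b] = conf Cs k [a, b]" if "length a = k" "length b = k" for a b
    using conf_map[OF inj c, of "[a,b]" k] that by simp
  have eq: "hf_act \<pi> ` {form_eval I Cs k \<psi> \<tau>' | \<tau>'. molecule I k \<tau>' \<and> E = conf Cs k [\<tau>', \<tau>]}
     = {form_eval I Cs k \<psi> \<tau>' | \<tau>'. molecule I k \<tau>' \<and> E = conf Cs k [\<tau>', map \<pi> \<tau>]}"
    if "(\<psi>,E) \<in> fset S" for \<psi> E
  proof
    show "hf_act \<pi> ` {form_eval I Cs k \<psi> \<tau>' | \<tau>'. molecule I k \<tau>' \<and> E = conf Cs k [\<tau>', \<tau>]}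
      \<subseteq> {form_eval I Cs k \<psi> \<tau>' | \<tau>'. molecule I k \<tau>' \<and> E = conf Cs k [\<tau>', map \<pi> \<tau>]}"
    proof
      fix x assume "x \<in> hf_act \<pi> ` {form_eval I Cs k \<psi> \<tau>' | \<tau>'. molecule I k \<tau>' \<and> E = conf Cs k [\<tau>', \<tau>]}"
      then obtain \<tau>' where m: "molecule I k \<tau>'" and E: "E = conf Cs k [\<tau>', \<tau>]"
        and x: "x = hf_act \<pi> (form_eval I Cs k \<psi> \<tau>')" by blast
      have lk: "length \<tau>' = k" using m by (simp add: molecule_def)
      have "hf_act \<pi> (form_eval I Cs k \<psi> \<tau>') = form_eval I Cs k \<psi> (map \<pi> \<tau>')"
        using IH that lk by auto
      moreover have "molecule I k (map \<pi> \<tau>')" using molecule_map[OF p m] .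
      moreover have "E = conf Cs k [map \<pi> \<tau>', map \<pi> \<tau>]" using E cf lk L by simp
      ultimately show "x \<in> {form_eval I Cs k \<psi> \<tau>' | \<tau>'. molecule I k \<tau>' \<and> E = conf Cs k [\<tau>', map \<pi> \<tau>]}"
        using x by blast
    qed
  next
    show "{form_eval I Cs k \<psi> \<tau>' | \<tau>'. molecule I k \<tau>' \<and> E = conf Cs k [\<tau>', map \<pi> \<tau>]}
      \<subseteq> hf_act \<pi> ` {form_eval I Cs k \<psi> \<tau>' | \<tau>'. molecule I k \<tau>' \<and> E = conf Cs k [\<tau>', \<tau>]}"
    proof
      fix x assume "x \<in> {form_eval I Cs k \<psi> \<tau>' | \<tau>'. molecule I k \<tau>' \<and> E = conf Cs k [\<tau>', map \<pi> \<tau>]}"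
      then obtain \<rho> where m: "molecule I k \<rho>" and E: "E = conf Cs k [\<rho>, map \<pi> \<tau>]"
        and x: "x = form_eval I Cs k \<psi> \<rho>" by blast
      define \<tau>' where "\<tau>' = map (inv \<pi>) \<rho>"
      have m': "molecule I k \<tau>'" unfolding \<tau>'_def using molecule_map[OF pi m] .
      have lk: "length \<tau>' = k" using m' by (simp add: molecule_def)
      have bk: "map \<pi> \<tau>' = \<rho>" unfolding \<tau>'_def by (simp add: ii map_idI)
      have "hf_act \<pi> (form_eval I Cs k \<psi> \<tau>') = form_eval I Cs k \<psi> \<rho>"
        using IH that lk bk by auto
      moreover have "E = conf Cs k [\<tau>', \<tau>]" using E cf[OF lk L] bk by simp
      ultimately show "x \<in> hf_act \<pi> ` {form_eval I Cs k \<psi> \<tau>' | \<tau>'. molecule I k \<tau>' \<and> E = conf Cs k [\<tau>', \<tau>]}"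
        using m' x by (metis (mono_tags, lifting) image_eqI mem_Collect_eq)
    qed
  qed
  have eq2: "hf_act \<pi> ` (case x of (\<psi>,E) \<Rightarrow> {form_eval I Cs k \<psi> \<tau>' | \<tau>'. molecule I k \<tau>' \<and> E = conf Cs k [\<tau>', \<tau>]})
     = (case x of (\<psi>,E) \<Rightarrow> {form_eval I Cs k \<psi> \<tau>' | \<tau>'. molecule I k \<tau>' \<and> E = conf Cs k [\<tau>', map \<pi> \<tau>]})"
    if "x \<in> fset S" for x
    using eq[of "fst x" "snd x"] that by (cases x) simp
  show ?thesis unfolding formX_def image_UN
    using eq2 by (intro SUP_cong) auto
qed

lemma form_equiv:
  assumes "finite I" "\<pi> \<in> Aut I Cs"
  shows "wf_form Cs k \<phi> \<Longrightarrow> length \<tau> = k \<Longrightarrow> hf_act \<pi> (form_eval I Cs k \<phi> \<tau>) = form_eval I Cs k \<phi> (map \<pi> \<tau>)"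
proof (induction \<phi> arbitrary: \<tau>)
  case (C p)
  thus ?case by simp
next
  case (Form S)
  have wf: "\<forall>(\<psi>,E)\<in>fset S. wf_form Cs k \<psi>" using Form.prems(1) by (auto simp: split_def)
  have IH: "\<forall>(\<psi>,E)\<in>fset S. \<forall>\<tau>'. length \<tau>' = k \<longrightarrow> hf_act \<pi> (form_eval I Cs k \<psi> \<tau>') = form_eval I Cs k \<psi> (map \<pi> \<tau>')"
    using Form.IH wf by fastforce
  show ?case unfolding form_eval_Form
    using hf_act_of_set[OF finite_formX[OF assms(1)]] formX_map[OF assms(2) IH Form.prems(2)] by simp
qed

lemma comm_image:
  assumes "(\<lambda>g. \<pi> \<circ> g) ` H = (\<lambda>g. g \<circ> \<pi>) ` H"
  shows "(\<lambda>h. F (\<pi> \<circ> h)) ` H = (\<lambda>h. F (h \<circ> \<pi>)) ` H"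
proof -
  have "(\<lambda>h. F (\<pi> \<circ> h)) ` H = F ` ((\<lambda>g. \<pi> \<circ> g) ` H)" by (simp add: image_image)
  also have "\<dots> = F ` ((\<lambda>g. g \<circ> \<pi>) ` H)" using assms by simp
  also have "\<dots> = (\<lambda>h. F (h \<circ> \<pi>)) ` H" by (simp add: image_image)
  finally show ?thesis .
qed

lemma finite_sub: "finite I \<Longrightarrow> sym_subgroup I H \<Longrightarrow> finite H"
  unfolding sym_subgroup_def Sym_def
  by (metis finite_permutations finite_subset)

lemma orbit_union_equiv:
  assumes fI: "finite I" and A: "\<pi> \<in> Aut I Cs" and of: "orbit_form I Cs k \<phi> G H"
    and m: "molecule I k \<sigma>"
  shows "hf_act \<pi> (orbit_union I Cs k \<phi> H \<sigma>) = orbit_union I Cs k \<phi> H (map \<pi> \<sigma>)"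
proof -
  have wf: "wf_form Cs k \<phi>" and sH: "sym_subgroup I H" and cH: "commutes_Aut I Cs H"
    using of by (auto simp: orbit_form_def)
  have fH: "finite H" using finite_sub[OF fI sH] .
  have comm: "(\<lambda>g. \<pi> \<circ> g) ` H = (\<lambda>g. g \<circ> \<pi>) ` H" using cH A by (simp add: commutes_Aut_def)
  have L: "length \<sigma> = k" using m by (simp add: molecule_def)
  show ?thesis
  proof (cases \<phi>)
    case (C p)
    have pk: "p < length \<sigma>" using wf C L by simp
    show ?thesis
    proof (cases "H = {id}")
      case True
      thus ?thesis using C pk by (simp add: orbit_union_def)
    next
      case False
      have e1: "{Atom (map h \<sigma> ! p) | h. h \<in> H} = (\<lambda>h. Atom (h (\<sigma>!p))) ` H"
        using pk by auto
      have e2: "{Atom (map h (map \<pi> \<sigma>) ! p) | h. h \<in> H} = (\<lambda>h. Atom ((h \<circ> \<pi>) (\<sigma>!p))) ` H"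
        using pk by auto
      have r1: "orbit_union I Cs k \<phi> H \<sigma> = hf_of_set ((\<lambda>h. Atom (h (\<sigma>!p))) ` H)"
        using False C e1 by (simp add: orbit_union_def)
      have r2: "orbit_union I Cs k \<phi> H (map \<pi> \<sigma>) = hf_of_set ((\<lambda>h. Atom ((h \<circ> \<pi>) (\<sigma>!p))) ` H)"
        using False C e2 by (simp add: orbit_union_def del: map_map)
      have e3: "hf_act \<pi> ` ((\<lambda>h. Atom (h (\<sigma>!p))) ` H) = (\<lambda>h. Atom ((\<pi> \<circ> h) (\<sigma>!p))) ` H"
        by (simp add: image_image)
      have "hf_act \<pi> (hf_of_set ((\<lambda>h. Atom (h (\<sigma>!p))) ` H)) = hf_of_set (hf_act \<pi> ` ((\<lambda>h. Atom (h (\<sigma>!p))) ` H))"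
        by (rule hf_act_of_set) (simp add: fH)
      also have "\<dots> = hf_of_set ((\<lambda>h. Atom ((h \<circ> \<pi>) (\<sigma>!p))) ` H)"
        unfolding e3 using comm_image[OF comm, of "\<lambda>h. Atom (h (\<sigma>!p))"] by simp
      finally show ?thesis unfolding r1 r2 .
    qed
  next
    case (Form S)
    have wfS: "\<forall>(\<psi>,E)\<in>fset S. wf_form Cs k \<psi>" using wf Form by (auto simp: split_def)
    have IH: "\<forall>(\<psi>,E)\<in>fset S. \<forall>\<tau>'. length \<tau>' = k \<longrightarrow> hf_act \<pi> (form_eval I Cs k \<psi> \<tau>') = form_eval I Cs k \<psi> (map \<pi> \<tau>')"
      using form_equiv[OF fI A] wfS by fastforce
    have el: "hf_elems (form_eval I Cs k \<phi> \<tau>) = formX I Cs k S \<tau>" for \<tau>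
      using Form form_eval_Form hf_elems_of_set finite_formX[OF fI] by metis
    have fin: "finite (\<Union>h\<in>H. formX I Cs k S (map h \<sigma>))"
      using fH finite_formX[OF fI] by blast
    have "hf_act \<pi> ` (\<Union>h\<in>H. formX I Cs k S (map h \<sigma>)) = (\<Union>h\<in>H. formX I Cs k S (map (\<pi> \<circ> h) \<sigma>))"
      unfolding image_UN using formX_map[OF A IH] L by simp
    also have "\<dots> = \<Union> ((\<lambda>h. formX I Cs k S (map h \<sigma>)) ` ((\<lambda>g. \<pi> \<circ> g) ` H))"
      by (simp add: image_image)
    also have "\<dots> = \<Union> ((\<lambda>h. formX I Cs k S (map h \<sigma>)) ` ((\<lambda>g. g \<circ> \<pi>) ` H))"
      using comm by simp
    also have "\<dots> = (\<Union>h\<in>H. formX I Cs k S (map h (map \<pi> \<sigma>)))"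
      by (simp add: image_image)
    finally have key: "hf_act \<pi> ` (\<Union>h\<in>H. formX I Cs k S (map h \<sigma>)) = (\<Union>h\<in>H. formX I Cs k S (map h (map \<pi> \<sigma>)))" .
    show ?thesis unfolding orbit_union_def Form form.case
      using el[unfolded Form] hf_act_of_set[OF fin] key by simp
  qed
qed

theorem lemma6:
  fixes I :: "'a set" and Cs :: "'a set set" and k :: nat
    and \<phi> :: "'a form" and G H :: "('a \<Rightarrow> 'a) set" and \<sigma> :: "'a list" and \<pi> :: "'a \<Rightarrow> 'a"
  assumes "finite I" and "partition_on I Cs"
    and "k \<ge> 1"
    and "orbit_form I Cs k \<phi> G H"
    and "molecule I k \<sigma>"
    and "\<pi> \<in> Aut I Cs"
  shows "hf_act \<pi> (orbit_eval I Cs k \<phi> G H \<sigma>) = orbit_eval I Cs k \<phi> G H (map \<pi> \<sigma>)"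
proof -
  define U where "U = orbit_union I Cs k \<phi> H \<sigma>"
  have sG: "sym_subgroup I G" and cG: "commutes_Aut I Cs G"
    using assms(4) by (auto simp: orbit_form_def)
  have fG: "finite G" using finite_sub[OF assms(1) sG] .
  have comm: "(\<lambda>g. \<pi> \<circ> g) ` G = (\<lambda>g. g \<circ> \<pi>) ` G" using cG assms(6) by (simp add: commutes_Aut_def)
  have U': "orbit_union I Cs k \<phi> H (map \<pi> \<sigma>) = hf_act \<pi> U"
    unfolding U_def using orbit_union_equiv[OF assms(1) assms(6) assms(4) assms(5)] by simp
  have "hf_act \<pi> ` ((\<lambda>g. hf_act g U) ` G) = (\<lambda>g. hf_act (\<pi> \<circ> g) U) ` G"
    by (simp add: image_image hf.map_comp)
  also have "\<dots> = (\<lambda>g. hf_act (g \<circ> \<pi>) U) ` G"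
    using comm_image[OF comm, of "\<lambda>g. hf_act g U"] .
  also have "\<dots> = (\<lambda>g. hf_act g (hf_act \<pi> U)) ` G"
    by (simp add: hf.map_comp)
  finally have key: "hf_act \<pi> ` ((\<lambda>g. hf_act g U) ` G) = (\<lambda>g. hf_act g (hf_act \<pi> U)) ` G" .
  have "hf_act \<pi> (hf_of_set ((\<lambda>g. hf_act g U) ` G)) = hf_of_set (hf_act \<pi> ` ((\<lambda>g. hf_act g U) ` G))"
    by (rule hf_act_of_set) (simp add: fG)
  then show ?thesis unfolding orbit_eval_def U' U_def[symmetric] key .
qed

end
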